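(* Let $G=(V,E)$ be a finite connected graph with $|V|=n$ and let $s:V\to\mathbb{R}$ satisfy $\sum_{x\in V}s(x)=n$. Then $s$ stabilizes to the all $1$ configuration, and the odometer of $s$ is the unique function $u:V\to\mathbb{R}$ satisfying $s+\Delta u=1$ and $\min u=0$.
   Context: $\Delta u(x)=\sum_{y\sim x}(u(y)-u(x))$. $\mathcal{F}_s=\{f:V\to\mathbb{R}: f\ge0,\ s+\Delta f\le1\}$; $s$ stabilizes if $\mathcal{F}_s\ne\emptyset$; the odometer is $u(x)=\inf\{f(x):f\in\mathcal{F}_s\}$; "stabilizes to the all $1$ configuration" means $s+\Delta u\equiv1$ for the odometer $u$. *)

theory Defs
  imports Main "HOL-Library.Extended_Real" Complex_Main
begin

definition finite_graph :: "'a set \<Rightarrow> ('a \<Rightarrow> 'a \<Rightarrow> bool) \<Rightarrow> bool" where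
  "finite_graph V E \<longleftrightarrow> finite V \<and> (\<forall>x y. E x y \<longrightarrow> x \<in> V \<and> y \<in> V)
     \<and> (\<forall>x y. E x y \<longrightarrow> E y x) \<and> (\<forall>x. \<not> E x x)"

definition connected_graph :: "'a set \<Rightarrow> ('a \<Rightarrow> 'a \<Rightarrow> bool) \<Rightarrow> bool" where
  "connected_graph V E \<longleftrightarrow> V \<noteq> {} \<and> (\<forall>x\<in>V. \<forall>y\<in>V. E\<^sup>*\<^sup>* x y)"

definition laplacian :: "'a set \<Rightarrow> ('a \<Rightarrow> 'a \<Rightarrow> bool) \<Rightarrow> ('a \<Rightarrow> real) \<Rightarrow> 'a \<Rightarrow> real" where
  "laplacian V E u x = (\<Sum>y\<in>{y\<in>V. E x y}. u y - u x)"

definition superharm_set :: "'a set \<Rightarrow> ('a \<Rightarrow> 'a \<Rightarrow> bool) \<Rightarrow> ('a \<Rightarrow> real) \<Rightarrow> ('a \<Rightarrow> real) set" where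
  "superharm_set V E s = {f. (\<forall>x\<in>V. f x \<ge> 0) \<and> (\<forall>x\<in>V. s x + laplacian V E f x \<le> 1)}"

definition stabilizes :: "'a set \<Rightarrow> ('a \<Rightarrow> 'a \<Rightarrow> bool) \<Rightarrow> ('a \<Rightarrow> real) \<Rightarrow> bool" where
  "stabilizes V E s \<longleftrightarrow> superharm_set V E s \<noteq> {}"

definition odometer :: "'a set \<Rightarrow> ('a \<Rightarrow> 'a \<Rightarrow> bool) \<Rightarrow> ('a \<Rightarrow> real) \<Rightarrow> 'a \<Rightarrow> real" where
  "odometer V E s x = Inf {f x | f. f \<in> superharm_set V E s}"

definition stabilizes_to_one :: "'a set \<Rightarrow> ('a \<Rightarrow> 'a \<Rightarrow> bool) \<Rightarrow> ('a \<Rightarrow> real) \<Rightarrow> bool" where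
  "stabilizes_to_one V E s \<longleftrightarrow> stabilizes V E s \<and>
     (\<forall>x\<in>V. s x + laplacian V E (odometer V E s) x = 1)"

end

theory Submission imports Defs "HOL-Library.Function_Algebras" begin

definition fscale :: "real \<Rightarrow> ('b \<Rightarrow> real) \<Rightarrow> 'b \<Rightarrow> real" where
  "fscale c f = (\<lambda>x. c * f x)"

global_interpretation fv: vector_space "fscale :: real \<Rightarrow> ('b \<Rightarrow> real) \<Rightarrow> 'b \<Rightarrow> real"
  by unfold_locales (auto simp: fscale_def fun_eq_iff algebra_simps)

lemma sum_fun_apply: "(\<Sum>a\<in>A. f a) x = (\<Sum>a\<in>A. f a x)"
  by (induction A rule: infinite_finite_induct) auto

lemma lap_alt:
  assumes "finite V"
  shows "laplacian V E f x = (\<Sum>y\<in>V. if E x y then f y - f x else 0)"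
  unfolding laplacian_def using assms by (simp add: sum.inter_filter)

lemma lap_sum_zero:
  assumes "finite_graph V E"
  shows "(\<Sum>x\<in>V. laplacian V E f x) = 0"
proof -
  have fin: "finite V" using assms by (simp add: finite_graph_def)
  have sym: "\<And>x y. E x y = E y x" using assms unfolding finite_graph_def by blast
  let ?a = "\<lambda>x y. if E x y then f y - f x else 0"
  have "(\<Sum>x\<in>V. laplacian V E f x) = (\<Sum>x\<in>V. \<Sum>y\<in>V. ?a x y)"
    using fin by (simp add: lap_alt)
  also have "\<dots> = (\<Sum>y\<in>V. \<Sum>x\<in>V. ?a x y)" by (rule sum.swap)
  also have "\<dots> = (\<Sum>y\<in>V. \<Sum>x\<in>V. - ?a y x)"
    by (intro sum.cong refl) (auto simp: sym)
  also have "\<dots> = - (\<Sum>y\<in>V. \<Sum>x\<in>V. ?a y x)" by (simp add: sum_negf)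
  finally have "(\<Sum>x\<in>V. \<Sum>y\<in>V. ?a x y) = - (\<Sum>x\<in>V. \<Sum>y\<in>V. ?a x y)"
    using \<open>(\<Sum>x\<in>V. laplacian V E f x) = _\<close> by linarith
  then show ?thesis using fin by (simp add: lap_alt)
qed

lemma lap_diff: "laplacian V E (\<lambda>x. f x - g x) x = laplacian V E f x - laplacian V E g x"
  unfolding laplacian_def sum_subtractf[symmetric] by (rule sum.cong) auto

lemma lap_add: "laplacian V E (\<lambda>x. f x + g x) x = laplacian V E f x + laplacian V E g x"
  unfolding laplacian_def sum.distrib[symmetric] by (rule sum.cong) auto

lemma lap_scale: "laplacian V E (\<lambda>x. c * f x) x = c * laplacian V E f x"
  unfolding laplacian_def sum_distrib_left by (rule sum.cong) (auto simp: algebra_simps)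

lemma lap_const: "laplacian V E (\<lambda>x. f x + c) x = laplacian V E f x"
  unfolding laplacian_def by simp

lemma lap_lincomb:
  "laplacian V E (\<lambda>y. \<Sum>a\<in>A. c a * g a y) x = (\<Sum>a\<in>A. c a * laplacian V E (g a) x)"
proof -
  have "laplacian V E (\<lambda>y. \<Sum>a\<in>A. c a * g a y) x
      = (\<Sum>y\<in>{y\<in>V. E x y}. \<Sum>a\<in>A. c a * (g a y - g a x))"
    unfolding laplacian_def by (simp add: sum_subtractf right_diff_distrib)
  also have "\<dots> = (\<Sum>a\<in>A. c a * laplacian V E (g a) x)"
    unfolding laplacian_def sum_distrib_left by (rule sum.swap)
  finally show ?thesis .
qed

lemma harmonic_const:
  assumes g: "finite_graph V E" and c: "connected_graph V E"
    and h: "\<forall>x\<in>V. laplacian V E f x = 0"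
  shows "\<forall>x\<in>V. \<forall>y\<in>V. f x = f y"
proof -
  have fin: "finite V" and ne: "V \<noteq> {}" using g c by (auto simp: finite_graph_def connected_graph_def)
  have inV: "\<And>x y. E x y \<Longrightarrow> x \<in> V \<and> y \<in> V" using g by (auto simp: finite_graph_def)
  have "Max (f ` V) \<in> f ` V" using fin ne by simp
  then obtain x0 where x0: "x0 \<in> V" "f x0 = Max (f ` V)" by auto
  have le: "\<And>x. x \<in> V \<Longrightarrow> f x \<le> f x0" using x0 fin by (simp add: Max_ge)
  have reach: "f y = f x0" if "E\<^sup>*\<^sup>* x0 y" for y
    using that
  proof (induction rule: rtranclp_induct)
    case base then show ?case by simp
  next
    case (step y z)
    have yV: "y \<in> V" "z \<in> V" using inV[OF step.hyps(2)] by auto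
    have fN: "finite {w\<in>V. E y w}" using fin by simp
    have "(\<Sum>w\<in>{w\<in>V. E y w}. f w - f y) = 0" using h yV by (simp add: laplacian_def)
    then have S0: "(\<Sum>w\<in>{w\<in>V. E y w}. f y - f w) = 0"
      using sum_negf[of "\<lambda>w. f w - f y" "{w\<in>V. E y w}"] by simp
    have nn: "0 \<le> f y - f w" if "w \<in> {w\<in>V. E y w}" for w
    proof -
      have "w \<in> V" using that by simp
      then show "0 \<le> f y - f w" using le[of w] step.IH by simp
    qed
    have all0: "\<forall>w\<in>{w\<in>V. E y w}. f y - f w = 0"
      using iffD1[OF sum_nonneg_eq_0_iff[of "{w\<in>V. E y w}" "\<lambda>w. f y - f w", OF fN nn] S0] .
    have "z \<in> {w\<in>V. E y w}" using yV step.hyps(2) by simp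
    then have "f y - f z = 0" using all0 by blast
    then show ?case using step.IH by linarith
  qed
  show ?thesis
  proof (intro ballI)
    fix x y assume "x \<in> V" "y \<in> V"
    have cc: "\<forall>x\<in>V. \<forall>y\<in>V. E\<^sup>*\<^sup>* x y" using c by (simp add: connected_graph_def)
    have r1: "E\<^sup>*\<^sup>* x0 x" using cc x0(1) \<open>x \<in> V\<close> by blast
    have r2: "E\<^sup>*\<^sup>* x0 y" using cc x0(1) \<open>y \<in> V\<close> by blast
    have "f x = f x0" by (rule reach[OF r1])
    moreover have "f y = f x0" by (rule reach[OF r2])
    ultimately show "f x = f y" by simp
  qed
qed

definition dlt :: "'b \<Rightarrow> 'b \<Rightarrow> real" where "dlt a = (\<lambda>x. if x = a then 1 else 0)"

lemma solve_exists:
  assumes g: "finite_graph V E" and c: "connected_graph V E"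
    and z: "\<forall>x. x \<notin> V \<longrightarrow> h x = 0" and zs: "(\<Sum>x\<in>V. h x) = 0"
  shows "\<exists>f. \<forall>x\<in>V. laplacian V E f x = h x"
proof -
  have fin: "finite V" and ne: "V \<noteq> {}" using g c by (auto simp: finite_graph_def connected_graph_def)
  obtain r where r: "r \<in> V" using ne by auto
  define A where "A = V - {r}"
  have finA: "finite A" using fin by (simp add: A_def)
  define L where "L = (\<lambda>f::'a \<Rightarrow> real. (\<lambda>x. if x \<in> V then laplacian V E f x else 0))"
  define \<phi> where "\<phi> = (\<lambda>a. L (dlt a))"
  define Z where "Z = {k::'a\<Rightarrow>real. (\<forall>x. x \<notin> V \<longrightarrow> k x = 0) \<and> (\<Sum>x\<in>V. k x) = 0}"
  define T where "T = (\<lambda>a. dlt a - dlt r) ` A"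
  have inj: "inj_on \<phi> A"
  proof (rule inj_onI)
    fix a b assume ab: "a \<in> A" "b \<in> A" "\<phi> a = \<phi> b"
    have "\<forall>x\<in>V. laplacian V E (\<lambda>y. dlt a y - dlt b y) x = 0"
    proof
      fix x assume xV: "x \<in> V"
      have "\<phi> a x = \<phi> b x" using ab(3) by simp
      then have "laplacian V E (dlt a) x = laplacian V E (dlt b) x"
        using xV by (simp add: \<phi>_def L_def)
      then show "laplacian V E (\<lambda>y. dlt a y - dlt b y) x = 0" by (simp add: lap_diff)
    qed
    note hc = harmonic_const[OF g c this]
    have aV: "a \<in> V" and ar: "a \<noteq> r" and br: "b \<noteq> r" using ab by (auto simp: A_def)
    have "dlt a a - dlt b a = dlt a r - dlt b r"
      using hc aV r by blast
    moreover have "dlt a a = 1" "dlt a r = 0" "dlt b r = 0" using ar br by (auto simp: dlt_def)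
    ultimately have "dlt b a = 1" by simp
    then show "a = b" by (simp add: dlt_def split: if_splits)
  qed
  have indep: "fv.independent (\<phi> ` A)"
  proof (rule fv.independent_if_scalars_zero)
    show "finite (\<phi> ` A)" using finA by simp
  next
    fix cc :: "('a \<Rightarrow> real) \<Rightarrow> real" and v
    assume s0: "(\<Sum>v\<in>\<phi> ` A. fscale (cc v) v) = 0" and v: "v \<in> \<phi> ` A"
    then obtain b where b: "b \<in> A" "v = \<phi> b" by auto
    have s1: "(\<Sum>a\<in>A. fscale (cc (\<phi> a)) (\<phi> a)) = 0"
      using s0 sum.reindex[OF inj, of "\<lambda>v. fscale (cc v) v"] by simp
    define k where "k = (\<lambda>y. \<Sum>a\<in>A. cc (\<phi> a) * dlt a y)"
    have "\<forall>x\<in>V. laplacian V E k x = 0"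
    proof
      fix x assume xV: "x \<in> V"
      have "(\<Sum>a\<in>A. fscale (cc (\<phi> a)) (\<phi> a)) x = 0" using s1 by simp
      then have "(\<Sum>a\<in>A. cc (\<phi> a) * laplacian V E (dlt a) x) = 0"
        using xV by (simp add: sum_fun_apply fscale_def \<phi>_def L_def)
      then show "laplacian V E k x = 0" unfolding k_def lap_lincomb .
    qed
    note hc = harmonic_const[OF g c this]
    have bV: "b \<in> V" using b(1) by (simp add: A_def)
    have "k b = k r" using hc bV r by blast
    moreover have "k r = 0" unfolding k_def by (intro sum.neutral) (auto simp: dlt_def A_def)
    moreover have kb: "k b = (\<Sum>a\<in>A. if a = b then cc (\<phi> a) else 0)"
      unfolding k_def by (intro sum.cong) (auto simp: dlt_def)
    moreover have "(\<Sum>a\<in>A. if a = b then cc (\<phi> a) else 0) = cc (\<phi> b)" using b(1) finA by simp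
    ultimately show "cc v = 0" using b by simp
  qed
  have lapsum: "\<And>f. L f \<in> Z"
    unfolding Z_def L_def using lap_sum_zero[OF g] by simp
  have ZT: "Z \<subseteq> fv.span T"
  proof
    fix k assume kZ: "k \<in> Z"
    have eq: "k = (\<Sum>a\<in>A. fscale (k a) (dlt a - dlt r))"
    proof
      fix x
      have "(\<Sum>a\<in>A. fscale (k a) (dlt a - dlt r)) x = (\<Sum>a\<in>A. k a * (dlt a x - dlt r x))"
        by (simp add: sum_fun_apply fscale_def)
      also have "\<dots> = k x"
      proof (cases "x \<in> V")
        case False
        then have "x \<notin> A" "x \<noteq> r" using r by (auto simp: A_def)
        then have "(\<Sum>a\<in>A. k a * (dlt a x - dlt r x)) = 0"
          by (intro sum.neutral) (auto simp: dlt_def)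
        then show ?thesis using False kZ by (simp add: Z_def)
      next
        case True
        show ?thesis
        proof (cases "x = r")
          case True
          have "(\<Sum>x\<in>V. k x) = k r + (\<Sum>x\<in>A. k x)"
            unfolding A_def using fin r by (simp add: sum.remove)
          moreover have "(\<Sum>a\<in>A. k a * (dlt a x - dlt r x)) = (\<Sum>a\<in>A. - k a)"
            using True by (intro sum.cong) (auto simp: dlt_def A_def)
          ultimately show ?thesis using True kZ by (simp add: Z_def sum_negf)
        next
          case False
          then have "x \<in> A" using \<open>x \<in> V\<close> by (simp add: A_def)
          moreover have "(\<Sum>a\<in>A. k a * (dlt a x - dlt r x)) = (\<Sum>a\<in>A. if a = x then k a else 0)"
            using False by (intro sum.cong) (auto simp: dlt_def)
          ultimately show ?thesis using finA by simp
        qed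
      qed
      finally show "k x = (\<Sum>a\<in>A. fscale (k a) (dlt a - dlt r)) x" by simp
    qed
    have "(\<Sum>a\<in>A. fscale (k a) (dlt a - dlt r)) \<in> fv.span T"
      by (intro fv.span_sum fv.span_scale fv.span_base) (auto simp: T_def)
    then show "k \<in> fv.span T" using eq by simp
  qed
  have cardT: "card T \<le> card A" unfolding T_def using finA card_image_le by blast
  have hZ: "h \<in> Z" using z zs by (simp add: Z_def)
  have hspan: "h \<in> fv.span (\<phi> ` A)"
  proof (rule ccontr)
    assume nh: "h \<notin> fv.span (\<phi> ` A)"
    have i2: "fv.independent (insert h (\<phi> ` A))" using fv.independent_insertI[OF nh indep] .
    have "insert h (\<phi> ` A) \<subseteq> fv.span T" using ZT hZ lapsum unfolding \<phi>_def by blast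
    from fv.independent_span_bound[OF _ i2 this] have "card (insert h (\<phi> ` A)) \<le> card T"
      using finA by (simp add: T_def)
    moreover have "h \<notin> \<phi> ` A" using nh fv.span_base by blast
    then have "card (insert h (\<phi> ` A)) = Suc (card A)"
      using finA card_image[OF inj] by simp
    ultimately show False using cardT by simp
  qed
  have sub: "fv.subspace (range L)"
    unfolding fv.subspace_def
  proof (intro conjI ballI allI)
    have "L 0 = 0" by (simp add: L_def laplacian_def fun_eq_iff)
    then show "0 \<in> range L" by (metis rangeI)
  next
    fix x y assume "x \<in> range L" "y \<in> range L"
    then obtain f1 f2 where "x = L f1" "y = L f2" by auto
    then have "x + y = L (\<lambda>t. f1 t + f2 t)" by (simp add: L_def fun_eq_iff lap_add)
    then show "x + y \<in> range L" by simp
  next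
    fix cc x assume "x \<in> range L"
    then obtain f1 where "x = L f1" by auto
    then have "fscale cc x = L (\<lambda>t. cc * f1 t)" by (simp add: L_def fun_eq_iff lap_scale fscale_def)
    then show "fscale cc x \<in> range L" by simp
  qed
  have "fv.span (\<phi> ` A) \<subseteq> range L"
    by (rule fv.span_minimal[OF _ sub]) (auto simp: \<phi>_def)
  with hspan obtain f where hf: "h = L f" by auto
  show ?thesis
  proof (intro exI ballI)
    fix x assume "x \<in> V"
    then show "laplacian V E f x = h x" using hf by (simp add: L_def)
  qed
qed


theorem lemma7p1:
  fixes V :: "'a set" and E :: "'a \<Rightarrow> 'a \<Rightarrow> bool" and s :: "'a \<Rightarrow> real"
  assumes "finite_graph V E" and "connected_graph V E"
    and "(\<Sum>x\<in>V. s x) = real (card V)"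
  shows "stabilizes_to_one V E s
    \<and> (\<forall>x\<in>V. s x + laplacian V E (odometer V E s) x = 1)
    \<and> Min (odometer V E s ` V) = 0
    \<and> (\<forall>u. (\<forall>x\<in>V. s x + laplacian V E u x = 1) \<and> Min (u ` V) = 0
           \<longrightarrow> (\<forall>x\<in>V. u x = odometer V E s x))"
proof -
  note g = assms(1) and c = assms(2)
  have fin: "finite V" and ne: "V \<noteq> {}" using g c by (auto simp: finite_graph_def connected_graph_def)
  define F where "F = superharm_set V E s"
  define u where "u = odometer V E s"
  define h where "h = (\<lambda>x. if x \<in> V then 1 - s x else 0)"
  have hs: "(\<Sum>x\<in>V. h x) = 0"
  proof -
    have "(\<Sum>x\<in>V. h x) = (\<Sum>x\<in>V. 1 - s x)" unfolding h_def by (rule sum.cong) auto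
    also have "\<dots> = 0" using assms(3) by (simp add: sum_subtractf)
    finally show ?thesis .
  qed
  obtain f0 where f0: "\<forall>x\<in>V. laplacian V E f0 x = h x"
    using solve_exists[OF g c _ hs] by (auto simp: h_def)
  define m0 where "m0 = Min (f0 ` V)"
  define f1 where "f1 = (\<lambda>x. f0 x + (- m0))"
  have "f1 \<in> F"
    unfolding F_def superharm_set_def
  proof (intro CollectI conjI ballI)
    fix x assume x: "x \<in> V"
    show "f1 x \<ge> 0" using x fin by (simp add: f1_def m0_def)
    show "s x + laplacian V E f1 x \<le> 1" using x f0 unfolding f1_def lap_const by (simp add: h_def)
  qed
  then have Fne: "F \<noteq> {}" by auto
  have Fnn: "\<And>f x. f \<in> F \<Longrightarrow> x \<in> V \<Longrightarrow> f x \<ge> 0" unfolding F_def superharm_set_def by auto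
  have Fle: "\<And>f x. f \<in> F \<Longrightarrow> x \<in> V \<Longrightarrow> s x + laplacian V E f x \<le> 1"
    unfolding F_def superharm_set_def by auto
  have Sne: "{f x | f. f \<in> F} \<noteq> {}" for x using Fne by auto
  have Sbdd: "bdd_below {f x | f. f \<in> F}" if "x \<in> V" for x
    using Fnn that by (auto intro!: bdd_belowI[of _ 0])
  have uinf: "u x = Inf {f x | f. f \<in> F}" for x unfolding u_def odometer_def F_def by simp
  have unn: "u x \<ge> 0" if "x \<in> V" for x
    unfolding uinf using Sne Fnn that by (auto intro!: cInf_greatest)
  have ule: "u x \<le> f x" if "x \<in> V" "f \<in> F" for x f
    unfolding uinf using Sbdd[OF that(1)] that(2) by (auto intro!: cInf_lower)
  have uclose: "\<exists>f\<in>F. f x < u x + e" if "e > 0" for x e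
  proof -
    have "Inf {f x | f. f \<in> F} < u x + e" using that uinf by simp
    from cInf_lessD[OF Sne this] show ?thesis by auto
  qed
  have usup: "s x + laplacian V E u x \<le> 1" if x: "x \<in> V" for x
  proof (rule ccontr)
    assume nt: "\<not> ?thesis"
    define d where "d = s x + laplacian V E u x - 1"
    have d: "d > 0" using nt by (simp add: d_def)
    define N where "N = {y\<in>V. E x y}"
    define e where "e = d / (real (card N) + 1)"
    have e: "e > 0" using d by (simp add: e_def)
    have ce: "real (card N) * e < d"
    proof -
      have "real (card N) * e < (real (card N) + 1) * e" using e by simp
      also have "\<dots> = d" unfolding e_def by simp
      finally show ?thesis .
    qed
    obtain f where f: "f \<in> F" "f x < u x + e" using uclose[OF e] by blast
    have "laplacian V E u x = (\<Sum>y\<in>N. u y - u x)" by (simp add: laplacian_def N_def)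
    also have "\<dots> \<le> (\<Sum>y\<in>N. (f y - f x) + e)"
    proof (rule sum_mono)
      fix y assume "y \<in> N"
      then have "u y \<le> f y" using ule f(1) by (simp add: N_def)
      then show "u y - u x \<le> f y - f x + e" using f(2) by linarith
    qed
    also have "\<dots> = laplacian V E f x + real (card N) * e"
      by (simp add: sum.distrib laplacian_def N_def)
    finally have "s x + laplacian V E u x \<le> s x + laplacian V E f x + real (card N) * e" by simp
    also have "\<dots> \<le> 1 + real (card N) * e" using Fle[OF f(1) x] by simp
    finally show False using ce by (simp add: d_def)
  qed
  have uF: "u \<in> F" unfolding F_def superharm_set_def using unn usup by blast
  have ueq: "\<forall>x\<in>V. s x + laplacian V E u x = 1"
  proof -
    have "(\<Sum>x\<in>V. 1 - (s x + laplacian V E u x)) = real (card V) - (\<Sum>x\<in>V. s x) - (\<Sum>x\<in>V. laplacian V E u x)"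
      by (simp add: sum_subtractf sum.distrib)
    also have "\<dots> = 0" using assms(3) lap_sum_zero[OF g] by simp
    finally have "(\<Sum>x\<in>V. 1 - (s x + laplacian V E u x)) = 0" .
    moreover have "\<forall>x\<in>V. 1 - (s x + laplacian V E u x) \<ge> 0" using usup by simp
    ultimately have "\<forall>x\<in>V. 1 - (s x + laplacian V E u x) = 0"
      using sum_nonneg_eq_0_iff[of V "\<lambda>x. 1 - (s x + laplacian V E u x)", OF fin] by blast
    then show ?thesis by simp
  qed
  define m where "m = Min (u ` V)"
  have mV: "m \<in> u ` V" unfolding m_def using fin ne by simp
  have mle: "m \<le> u x" if "x \<in> V" for x unfolding m_def using fin that by simp
  have m0: "m \<ge> 0" using mV unn by auto
  have "(\<lambda>x. u x + (- m)) \<in> F"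
    unfolding F_def superharm_set_def
  proof (intro CollectI conjI ballI)
    fix x assume x: "x \<in> V"
    show "u x + - m \<ge> 0" using mle[OF x] by simp
    show "s x + laplacian V E (\<lambda>x. u x + - m) x \<le> 1" unfolding lap_const using usup[OF x] .
  qed
  then have um: "u x \<le> u x + - m" if "x \<in> V" for x using ule that by blast
  obtain x3 where "x3 \<in> V" using ne by blast
  from um[OF this] have "m = 0" using m0 by linarith
  have uniq: "\<forall>v. (\<forall>x\<in>V. s x + laplacian V E v x = 1) \<and> Min (v ` V) = 0
           \<longrightarrow> (\<forall>x\<in>V. v x = u x)"
  proof (intro allI impI)
    fix v assume vh: "(\<forall>x\<in>V. s x + laplacian V E v x = 1) \<and> Min (v ` V) = 0"
    have "\<forall>x\<in>V. laplacian V E (\<lambda>y. v y - u y) x = 0"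
    proof
      fix x assume "x \<in> V"
      then have "s x + laplacian V E v x = 1" "s x + laplacian V E u x = 1" using vh ueq by blast+
      then show "laplacian V E (\<lambda>y. v y - u y) x = 0" unfolding lap_diff by linarith
    qed
    note hc = harmonic_const[OF g c this]
    obtain x1 where x1: "x1 \<in> V" "u x1 = 0" using mV \<open>m = 0\<close> by auto
    have "Min (v ` V) \<in> v ` V" using fin ne by simp
    then obtain x2 where x2: "x2 \<in> V" "v x2 = 0" using vh by auto
    have "Min (v ` V) \<le> v x1" using x1(1) fin by simp
    then have "v x1 \<ge> 0" using vh by simp
    moreover have "u x2 \<ge> 0" using unn x2 by simp
    moreover have "v x1 - u x1 = v x2 - u x2" using hc x1 x2 by blast
    ultimately have z: "v x1 - u x1 = 0" using x1 x2 by linarith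
    show "\<forall>x\<in>V. v x = u x"
    proof
      fix x assume "x \<in> V"
      then have "v x - u x = v x1 - u x1" using hc x1 by blast
      then show "v x = u x" using z by simp
    qed
  qed
  have "stabilizes V E s" unfolding stabilizes_def using uF F_def by blast
  then have "stabilizes_to_one V E s"
    unfolding stabilizes_to_one_def using ueq u_def by simp
  moreover have "Min (odometer V E s ` V) = 0" using \<open>m = 0\<close> unfolding m_def u_def .
  ultimately show ?thesis using ueq uniq unfolding u_def by blast
qed

end
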